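(* Let $G$ be a multiplicative monoid with identity, let $N$ be a $G$-graded near-ring and $P$ a graded ideal of $N$. If $P$ is a graded weakly prime ideal of $N$ and $(\{0\}:P)\subseteq P$, then $P$ is a graded prime ideal of $N$.
   Context: A near-ring $(N,+,\cdot)$ is a set with two binary operations such that $(N,+)$ is a group (not necessarily abelian), $(N,\cdot)$ is a semigroup, and $(a+b)y = ay+by$ for all $a,b,y\in N$. For a multiplicative monoid $G$ with identity, $N$ is a $G$-graded near-ring if there is a family $\{N_\sigma\}_{\sigma\in G}$ of additive normal subgroups of $N$ with $N=\bigoplus_{\sigma\in G}N_\sigma$ and $N_\sigma N_\tau\subseteq N_{\sigma\tau}$. An ideal $P$ is graded if $P=\bigoplus_{\sigma}(P\cap N_\sigma)$. For subsets $A,B$, $(A:B)=\{t\in N: tB\subseteq A\}$. For ideals $I,J$, $IJ$ denotes their product. A graded ideal $P$ is graded prime if for all graded ideals $I,J$ with $IJ\subseteq P$, either $I\subseteq P$ or $J\subseteq P$; graded weakly prime if the same holds whenever $\{0\}\neq IJ\subseteq P$. *)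

theory Defs
  imports Main
begin

text \<open>A (right) near-ring: (N,+) a group, not necessarily abelian (class group_add does not
  require commutativity), (N,*) a semigroup, and right distributivity (a+b)y = ay+by.
  The near-ring N is the whole type 'a.\<close>
class near_ring = group_add + semigroup_mult +
  assumes nr_distrib_right: "(a + b) * c = a * c + b * c"

definition add_subgroup :: "'a::group_add set \<Rightarrow> bool" where
  "add_subgroup H \<longleftrightarrow> 0 \<in> H \<and> (\<forall>x\<in>H. \<forall>y\<in>H. x + y \<in> H) \<and> (\<forall>x\<in>H. - x \<in> H)"

definition normal_add_subgroup :: "'a::group_add set \<Rightarrow> bool" where
  "normal_add_subgroup H \<longleftrightarrow> add_subgroup H \<and> (\<forall>x. \<forall>h\<in>H. x + h + - x \<in> H)"

definition add_gen :: "'a::group_add set \<Rightarrow> 'a set" where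
  "add_gen S = \<Inter>{H. add_subgroup H \<and> S \<subseteq> H}"

text \<open>N is G-graded: N is the internal direct sum of the additive normal subgroups Ns \<sigma>,
  and Ns \<sigma> Ns \<tau> \<subseteq> Ns (\<sigma>\<tau>). The monoid G is the whole type 'g.\<close>
definition graded_near_ring :: "('g::monoid_mult \<Rightarrow> 'a::near_ring set) \<Rightarrow> bool" where
  "graded_near_ring Ns \<longleftrightarrow>
     (\<forall>\<sigma>. normal_add_subgroup (Ns \<sigma>)) \<and>
     add_gen (\<Union>\<sigma>. Ns \<sigma>) = UNIV \<and>
     (\<forall>\<sigma>. Ns \<sigma> \<inter> add_gen (\<Union>\<tau>\<in>{\<tau>. \<tau> \<noteq> \<sigma>}. Ns \<tau>) = {0}) \<and>
     (\<forall>\<sigma> \<tau>. \<forall>x\<in>Ns \<sigma>. \<forall>y\<in>Ns \<tau>. x * y \<in> Ns (\<sigma> * \<tau>))"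

definition nr_ideal :: "'a::near_ring set \<Rightarrow> bool" where
  "nr_ideal I \<longleftrightarrow> normal_add_subgroup I \<and> (\<forall>i\<in>I. \<forall>n. i * n \<in> I) \<and>
     (\<forall>n n'. \<forall>i\<in>I. n * (n' + i) - n * n' \<in> I)"

text \<open>P = \<Oplus>\<sigma> (P \<inter> N\<sigma>) (directness is inherited from the grading of N).\<close>
definition graded_ideal :: "('g::monoid_mult \<Rightarrow> 'a::near_ring set) \<Rightarrow> 'a set \<Rightarrow> bool" where
  "graded_ideal Ns P \<longleftrightarrow> nr_ideal P \<and> P = add_gen (\<Union>\<sigma>. P \<inter> Ns \<sigma>)"

text \<open>Product of ideals: the set of products ij.\<close>
definition set_prod :: "'a::times set \<Rightarrow> 'a set \<Rightarrow> 'a set" where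
  "set_prod A B = {i * j | i j. i \<in> A \<and> j \<in> B}"

definition colon :: "'a::times set \<Rightarrow> 'a set \<Rightarrow> 'a set" where
  "colon A B = {t. \<forall>b\<in>B. t * b \<in> A}"

definition graded_prime :: "('g::monoid_mult \<Rightarrow> 'a::near_ring set) \<Rightarrow> 'a set \<Rightarrow> bool" where
  "graded_prime Ns P \<longleftrightarrow> graded_ideal Ns P \<and>
     (\<forall>I J. graded_ideal Ns I \<and> graded_ideal Ns J \<and> set_prod I J \<subseteq> P \<longrightarrow> I \<subseteq> P \<or> J \<subseteq> P)"

definition graded_weakly_prime :: "('g::monoid_mult \<Rightarrow> 'a::near_ring set) \<Rightarrow> 'a set \<Rightarrow> bool" where
  "graded_weakly_prime Ns P \<longleftrightarrow> graded_ideal Ns P \<and>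
     (\<forall>I J. graded_ideal Ns I \<and> graded_ideal Ns J \<and> set_prod I J \<noteq> {0} \<and> set_prod I J \<subseteq> P
        \<longrightarrow> I \<subseteq> P \<or> J \<subseteq> P)"

end

theory Submission
  imports Defs
begin

lemma add_gen_least: "add_subgroup H \<Longrightarrow> S \<subseteq> H \<Longrightarrow> add_gen S \<subseteq> H"
  unfolding add_gen_def by blast

lemma add_gen_subgroup: "add_subgroup (add_gen S)"
  unfolding add_gen_def add_subgroup_def by blast

lemma add_gen_mono: "S \<subseteq> T \<Longrightarrow> add_gen S \<subseteq> add_gen T"
  unfolding add_gen_def by blast

lemma add_gen_incl: "S \<subseteq> add_gen S"
  unfolding add_gen_def by blast

lemmas gs = add.assoc add.left_cancel minus_add_cancel add_minus_cancel minus_add minus_minus add.right_inverse add.left_inverse add_0_right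

definition ssum :: "'a::plus set \<Rightarrow> 'a set \<Rightarrow> 'a set" where
  "ssum A B = {a + b | a b. a \<in> A \<and> b \<in> B}"

lemma ideal_props:
  assumes "nr_ideal I"
  shows "0 \<in> I" "\<And>x y. x \<in> I \<Longrightarrow> y \<in> I \<Longrightarrow> x + y \<in> I" "\<And>x. x \<in> I \<Longrightarrow> - x \<in> I"
    "\<And>x h. h \<in> I \<Longrightarrow> x + h + - x \<in> I" "\<And>i n. i \<in> I \<Longrightarrow> i * n \<in> I"
    "\<And>n n' i. i \<in> I \<Longrightarrow> n * (n' + i) - n * n' \<in> I"
  using assms unfolding nr_ideal_def normal_add_subgroup_def add_subgroup_def by blast+

lemma ssum_comm:
  fixes I P :: "'a::near_ring set"
  assumes "nr_ideal I" "nr_ideal P" "x \<in> ssum P I" shows "x \<in> ssum I P"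
proof -
  obtain p i where x: "x = p + i" "p \<in> P" "i \<in> I" using assms(3) unfolding ssum_def by blast
  have "x = (p + i + - p) + p" using x by (simp only: gs)
  moreover have "p + i + - p \<in> I" using ideal_props(4)[OF assms(1)] x by blast
  ultimately show ?thesis using x unfolding ssum_def by blast
qed

lemma ssumI: "a \<in> A \<Longrightarrow> b \<in> B \<Longrightarrow> a + b \<in> ssum A B"
  unfolding ssum_def by blast

lemma ssumE: "x \<in> ssum A B \<Longrightarrow> (\<And>a b. x = a + b \<Longrightarrow> a \<in> A \<Longrightarrow> b \<in> B \<Longrightarrow> Q) \<Longrightarrow> Q"
  unfolding ssum_def by blast

lemma ssum_ideal:
  fixes I P :: "'a::near_ring set"
  assumes I: "nr_ideal I" and P: "nr_ideal P"
  shows "nr_ideal (ssum I P)"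
proof -
  note i = ideal_props[OF I] and p = ideal_props[OF P]
  have sub: "add_subgroup (ssum I P)"
    unfolding add_subgroup_def
  proof (intro conjI ballI)
    show "0 \<in> ssum I P" using ssumI[OF i(1) p(1)] by simp
  next
    fix x y assume "x \<in> ssum I P" "y \<in> ssum I P"
    then obtain a b c d where xy: "x = a + b" "y = c + d" "a \<in> I" "b \<in> P" "c \<in> I" "d \<in> P"
      by (metis ssumE)
    have "x + y = (a + (b + c + - b)) + (b + d)" using xy by (simp only: gs)
    moreover have "a + (b + c + - b) \<in> I" by (rule i(2)[OF xy(3) i(4)[OF xy(5)]])
    moreover have "b + d \<in> P" by (rule p(2)[OF xy(4) xy(6)])
    ultimately show "x + y \<in> ssum I P" using ssumI by metis
  next
    fix x assume "x \<in> ssum I P"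
    then obtain a b where xy: "x = a + b" "a \<in> I" "b \<in> P" by (metis ssumE)
    have "- x = (- b + - a + - (- b)) + - b" using xy by (simp only: gs)
    moreover have "- b + - a + - (- b) \<in> I" by (rule i(4)[OF i(3)[OF xy(2)]])
    moreover have "- b \<in> P" by (rule p(3)[OF xy(3)])
    ultimately show "- x \<in> ssum I P" using ssumI by metis
  qed
  show ?thesis unfolding nr_ideal_def normal_add_subgroup_def
  proof (intro conjI allI ballI sub)
    fix x h assume "h \<in> ssum I P"
    then obtain a b where xy: "h = a + b" "a \<in> I" "b \<in> P" by (metis ssumE)
    have "x + h + - x = (x + a + - x) + (x + b + - x)" using xy by (simp only: gs)
    moreover have "x + a + - x \<in> I" by (rule i(4)[OF xy(2)])
    moreover have "x + b + - x \<in> P" by (rule p(4)[OF xy(3)])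
    ultimately show "x + h + - x \<in> ssum I P" using ssumI by metis
  next
    fix h n assume "h \<in> ssum I P"
    then obtain a b where xy: "h = a + b" "a \<in> I" "b \<in> P" by (metis ssumE)
    have "h * n = a * n + b * n" using xy by (simp add: nr_distrib_right)
    moreover have "a * n \<in> I" by (rule i(5)[OF xy(2)])
    moreover have "b * n \<in> P" by (rule p(5)[OF xy(3)])
    ultimately show "h * n \<in> ssum I P" using ssumI by metis
  next
    fix n n' h assume "h \<in> ssum I P"
    then obtain a b where xy: "h = a + b" "a \<in> I" "b \<in> P" by (metis ssumE)
    have "n * (n' + h) - n * n' = (n * ((n' + a) + b) - n * (n' + a)) + (n * (n' + a) - n * n')"
      unfolding xy(1) by (simp only: diff_conv_add_uminus gs)
    moreover have "n * ((n' + a) + b) - n * (n' + a) \<in> P" by (rule p(6)[OF xy(3)])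
    moreover have "n * (n' + a) - n * n' \<in> I" by (rule i(6)[OF xy(2)])
    ultimately have "n * (n' + h) - n * n' \<in> ssum P I" using ssumI by metis
    then show "n * (n' + h) - n * n' \<in> ssum I P" using ssum_comm[OF I P] by blast
  qed
qed

lemma ssum_graded:
  fixes I P :: "'a::near_ring set" and Ns :: "'g::monoid_mult \<Rightarrow> 'a set"
  assumes I: "graded_ideal Ns I" and P: "graded_ideal Ns P"
  shows "graded_ideal Ns (ssum I P)"
proof -
  have iI: "nr_ideal I" and iP: "nr_ideal P" using I P unfolding graded_ideal_def by auto
  have S: "nr_ideal (ssum I P)" by (rule ssum_ideal[OF iI iP])
  have subS: "add_subgroup (ssum I P)" using S unfolding nr_ideal_def normal_add_subgroup_def by blast
  have IS: "I \<subseteq> ssum I P" unfolding ssum_def using ideal_props(1)[OF iP] by force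
  have PS: "P \<subseteq> ssum I P" unfolding ssum_def using ideal_props(1)[OF iI] by force
  let ?G = "add_gen (\<Union>\<sigma>. ssum I P \<inter> Ns \<sigma>)"
  have "I \<subseteq> ?G"
  proof -
    have "I = add_gen (\<Union>\<sigma>. I \<inter> Ns \<sigma>)" using I unfolding graded_ideal_def by blast
    also have "\<dots> \<subseteq> ?G" by (rule add_gen_mono) (use IS in blast)
    finally show ?thesis .
  qed
  moreover have "P \<subseteq> ?G"
  proof -
    have "P = add_gen (\<Union>\<sigma>. P \<inter> Ns \<sigma>)" using P unfolding graded_ideal_def by blast
    also have "\<dots> \<subseteq> ?G" by (rule add_gen_mono) (use PS in blast)
    finally show ?thesis .
  qed
  ultimately have "ssum I P \<subseteq> ?G"
  proof -
    assume a1: "I \<subseteq> ?G" and a2: "P \<subseteq> ?G"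
    have cl: "\<And>x y. x \<in> ?G \<Longrightarrow> y \<in> ?G \<Longrightarrow> x + y \<in> ?G"
      using add_gen_subgroup[of "\<Union>\<sigma>. ssum I P \<inter> Ns \<sigma>"] unfolding add_subgroup_def by blast
    show ?thesis
    proof
      fix x assume "x \<in> ssum I P"
      then obtain a b where "x = a + b" "a \<in> I" "b \<in> P" by (metis ssumE)
      then show "x \<in> ?G" using cl a1 a2 by blast
    qed
  qed
  moreover have "?G \<subseteq> ssum I P" by (rule add_gen_least[OF subS]) blast
  ultimately show ?thesis using S unfolding graded_ideal_def by blast
qed

theorem proposition1:
  fixes Ns :: "'g::monoid_mult \<Rightarrow> 'a::near_ring set" and P :: "'a set"
  assumes "graded_near_ring Ns"
    and "graded_ideal Ns P"
    and "graded_weakly_prime Ns P"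
    and "colon {0} P \<subseteq> P"
  shows "graded_prime Ns P"
  unfolding graded_prime_def
proof (intro conjI allI impI assms(2))
  fix I J assume H: "graded_ideal Ns I \<and> graded_ideal Ns J \<and> set_prod I J \<subseteq> P"
  have gI0: "graded_ideal Ns I" and gJ0: "graded_ideal Ns J" and IJ: "set_prod I J \<subseteq> P"
    using H by simp_all
  have iI: "nr_ideal I" using gI0 unfolding graded_ideal_def by simp
  have iJ: "nr_ideal J" using gJ0 unfolding graded_ideal_def by simp
  have iP: "nr_ideal P" using assms(2) unfolding graded_ideal_def by simp
  note i = ideal_props[OF iI] and j = ideal_props[OF iJ] and p = ideal_props[OF iP]
  have wp: "\<And>I J. graded_ideal Ns I \<Longrightarrow> graded_ideal Ns J \<Longrightarrow> set_prod I J \<noteq> {0} \<Longrightarrow>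
      set_prod I J \<subseteq> P \<Longrightarrow> I \<subseteq> P \<or> J \<subseteq> P"
    using assms(3) unfolding graded_weakly_prime_def by blast
  show "I \<subseteq> P \<or> J \<subseteq> P"
  proof (rule ccontr)
    assume nn: "\<not> (I \<subseteq> P \<or> J \<subseteq> P)"
    have gI: "graded_ideal Ns (ssum I P)" by (rule ssum_graded[OF gI0 assms(2)])
    have gJ: "graded_ideal Ns (ssum J P)" by (rule ssum_graded[OF gJ0 assms(2)])
    have prod: "set_prod (ssum I P) (ssum J P) \<subseteq> P"
    proof
      fix x assume "x \<in> set_prod (ssum I P) (ssum J P)"
      then obtain u v where uv: "x = u * v" "u \<in> ssum I P" "v \<in> ssum J P"
        unfolding set_prod_def by blast
      obtain a b where ab: "u = a + b" "a \<in> I" "b \<in> P" using uv(2) by (metis ssumE)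
      obtain c d where cd: "v = c + d" "c \<in> J" "d \<in> P" using uv(3) by (metis ssumE)
      have "x = ((a * (c + d) - a * c) + a * c) + b * (c + d)"
        unfolding uv(1) ab(1) cd(1) nr_distrib_right diff_add_cancel ..
      moreover have "a * (c + d) - a * c \<in> P" by (rule p(6)[OF cd(3)])
      moreover have "b * (c + d) \<in> P" by (rule p(5)[OF ab(3)])
      moreover have "a * c \<in> set_prod I J" unfolding set_prod_def using ab(2) cd(2) by blast
      then have "a * c \<in> P" using IJ by blast
      ultimately show "x \<in> P" using p(2) by metis
    qed
    have IS: "I \<subseteq> ssum I P"
    proof
      fix a assume "a \<in> I" then show "a \<in> ssum I P" using ssumI[of a I 0 P] p(1) by simp
    qed
    have JS: "J \<subseteq> ssum J P"
    proof
      fix a assume "a \<in> J" then show "a \<in> ssum J P" using ssumI[of a J 0 P] p(1) by simp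
    qed
    show False
    proof (cases "set_prod (ssum I P) (ssum J P) = {0}")
      case False
      have "ssum I P \<subseteq> P \<or> ssum J P \<subseteq> P" by (rule wp[OF gI gJ False prod])
      then show False using nn IS JS by blast
    next
      case True
      have "I \<subseteq> colon {0} P"
      proof
        fix a assume a: "a \<in> I"
        have "a * q = 0" if q: "q \<in> P" for q
        proof -
          have "a + 0 \<in> ssum I P" by (rule ssumI[OF a p(1)])
          moreover have "0 + q \<in> ssum J P" by (rule ssumI[OF j(1) q])
          ultimately have "(a + 0) * (0 + q) \<in> set_prod (ssum I P) (ssum J P)"
            unfolding set_prod_def by blast
          then show ?thesis using True by simp
        qed
        then show "a \<in> colon {0} P" unfolding colon_def by blast
      qed
      then show False using assms(4) nn by blast
    qed
  qed
qed

end
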